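(* Assume the univalence axiom. Suppose given short exact sequences $A\xrightarrow{i}E\xrightarrow{p}B'$ and $A'\xrightarrow{j}F\xrightarrow{q}B$ of abelian groups together with homomorphisms $f:A\to A'$, $\phi:E\to F$, $g:B'\to B$ such that $\phi\circ i = j\circ f$ and $q\circ\phi = g\circ p$. Then there is a path $f_*(E) = g^*(F)$ in $\mathrm{AbSES}(B',A')$.
   Context: We work in homotopy type theory with univalence. For abelian groups $A,B$, $\mathrm{AbSES}(B,A)$ is the type of short exact sequences $(E,i,p)$: $E$ an abelian group, $i:A\to E$ injective, $p:E\to B$ surjective, $p\circ i=0$, and $A\to\ker p$ surjective. For $g:B'\to B$ and $F=(F,j,q)\in\mathrm{AbSES}(B,A')$, the pullback $g^*(F)\in\mathrm{AbSES}(B',A')$ has middle group $F\times_B B'=\{(x,b')\mid q(x)=g(b')\}$ with the evident maps. For $f:A\to A'$ and $E=(E,i,p)\in\mathrm{AbSES}(B',A)$, the pushout $f_*(E)\in\mathrm{AbSES}(B',A')$ has middle group the pushout $(A'\oplus E)/\{(f(a),-i(a))\mid a\in A\}$, with inclusion induced by $A'\to A'\oplus E$ and projection induced by $(a',e)\mapsto p(e)$. *)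

theory Defs
  imports "HOL-Algebra.Algebra"
begin

definition is_ses ::
  "'a monoid \<Rightarrow> 'e monoid \<Rightarrow> 'b monoid \<Rightarrow> ('a \<Rightarrow> 'e) \<Rightarrow> ('e \<Rightarrow> 'b) \<Rightarrow> bool" where
  "is_ses A E B i p \<longleftrightarrow>
     comm_group A \<and> comm_group E \<and> comm_group B \<and>
     i \<in> hom A E \<and> p \<in> hom E B \<and>
     inj_on i (carrier A) \<and>
     p ` carrier E = carrier B \<and>
     (\<forall>a \<in> carrier A. p (i a) = \<one>\<^bsub>B\<^esub>) \<and>
     {e \<in> carrier E. p e = \<one>\<^bsub>B\<^esub>} \<subseteq> i ` carrier A"

definition pushout_rel ::
  "'e monoid \<Rightarrow> 'a monoid \<Rightarrow> ('a \<Rightarrow> 'c) \<Rightarrow> ('a \<Rightarrow> 'e) \<Rightarrow> ('c \<times> 'e) set" where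
  "pushout_rel E A f i = {(f a, inv\<^bsub>E\<^esub> (i a)) | a. a \<in> carrier A}"

definition pushout_grp ::
  "'a monoid \<Rightarrow> 'c monoid \<Rightarrow> 'e monoid \<Rightarrow> ('a \<Rightarrow> 'c) \<Rightarrow> ('a \<Rightarrow> 'e) \<Rightarrow> ('c \<times> 'e) set monoid" where
  "pushout_grp A A' E f i = (A' \<times>\<times> E) Mod (pushout_rel E A f i)"

definition pushout_inc ::
  "'a monoid \<Rightarrow> 'c monoid \<Rightarrow> 'e monoid \<Rightarrow> ('a \<Rightarrow> 'c) \<Rightarrow> ('a \<Rightarrow> 'e) \<Rightarrow> 'c \<Rightarrow> ('c \<times> 'e) set" where
  "pushout_inc A A' E f i a' = (pushout_rel E A f i) #>\<^bsub>A' \<times>\<times> E\<^esub> (a', \<one>\<^bsub>E\<^esub>)"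

text \<open>The projection is induced by (a',e) \<mapsto> p e; on a coset it is the unique value.\<close>

definition pushout_proj :: "('e \<Rightarrow> 'b) \<Rightarrow> ('c \<times> 'e) set \<Rightarrow> 'b" where
  "pushout_proj p C = the_elem ((\<lambda>(a', e). p e) ` C)"

definition pullback_grp ::
  "'f monoid \<Rightarrow> 'b monoid \<Rightarrow> ('f \<Rightarrow> 'd) \<Rightarrow> ('b \<Rightarrow> 'd) \<Rightarrow> ('f \<times> 'b) monoid" where
  "pullback_grp F B' q g =
     (F \<times>\<times> B')\<lparr>carrier := {(x, b'). x \<in> carrier F \<and> b' \<in> carrier B' \<and> q x = g b'}\<rparr>"

definition pullback_inc :: "'b monoid \<Rightarrow> ('c \<Rightarrow> 'f) \<Rightarrow> 'c \<Rightarrow> 'f \<times> 'b" where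
  "pullback_inc B' j a' = (j a', \<one>\<^bsub>B'\<^esub>)"

definition pullback_proj :: "'f \<times> 'b \<Rightarrow> 'b" where
  "pullback_proj = snd"

text \<open>An identification of two extensions in AbSES(B',A') (by univalence: a group
  isomorphism of middle groups commuting with inclusions and projections).\<close>

definition ses_iso ::
  "'c monoid \<Rightarrow> 'x monoid \<Rightarrow> ('c \<Rightarrow> 'x) \<Rightarrow> ('x \<Rightarrow> 'b) \<Rightarrow>
   'y monoid \<Rightarrow> ('c \<Rightarrow> 'y) \<Rightarrow> ('y \<Rightarrow> 'b) \<Rightarrow> bool" where
  "ses_iso A' G1 i1 p1 G2 i2 p2 \<longleftrightarrow>
     (\<exists>h. h \<in> iso G1 G2 \<and>
          (\<forall>a \<in> carrier A'. h (i1 a) = i2 a) \<and>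
          (\<forall>x \<in> carrier G1. p2 (h x) = p1 x))"

end

theory Submission
  imports Defs
begin

theorem corollary8:
  fixes A :: "'a monoid" and E :: "'e monoid" and B' :: "'b monoid"
    and A' :: "'c monoid" and F :: "'f monoid" and B :: "'d monoid"
    and i :: "'a \<Rightarrow> 'e" and p :: "'e \<Rightarrow> 'b"
    and j :: "'c \<Rightarrow> 'f" and q :: "'f \<Rightarrow> 'd"
    and f :: "'a \<Rightarrow> 'c" and \<phi> :: "'e \<Rightarrow> 'f" and g :: "'b \<Rightarrow> 'd"
  assumes sesE: "is_ses A E B' i p"
    and sesF: "is_ses A' F B j q"
    and f_hom: "f \<in> hom A A'"
    and phi_hom: "\<phi> \<in> hom E F"
    and g_hom: "g \<in> hom B' B"
    and left_sq: "\<forall>a \<in> carrier A. \<phi> (i a) = j (f a)"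
    and right_sq: "\<forall>e \<in> carrier E. q (\<phi> e) = g (p e)"
  shows "ses_iso A'
           (pushout_grp A A' E f i) (pushout_inc A A' E f i) (pushout_proj p)
           (pullback_grp F B' q g) (pullback_inc B' j) pullback_proj"
proof -
  interpret cA: comm_group A using sesE unfolding is_ses_def by blast
  interpret cE: comm_group E using sesE unfolding is_ses_def by blast
  interpret cB': comm_group B' using sesE unfolding is_ses_def by blast
  interpret cA': comm_group A' using sesF unfolding is_ses_def by blast
  interpret cF: comm_group F using sesF unfolding is_ses_def by blast
  interpret cB: comm_group B using sesF unfolding is_ses_def by blast
  interpret hi: group_hom A E i using sesE unfolding is_ses_def group_hom_def group_hom_axioms_def
    by (simp add: cA.group_axioms cE.group_axioms)
  interpret hp: group_hom E B' p using sesE unfolding is_ses_def group_hom_def group_hom_axioms_def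
    by (simp add: cE.group_axioms cB'.group_axioms)
  interpret hj: group_hom A' F j using sesF unfolding is_ses_def group_hom_def group_hom_axioms_def
    by (simp add: cA'.group_axioms cF.group_axioms)
  interpret hq: group_hom F B q using sesF unfolding is_ses_def group_hom_def group_hom_axioms_def
    by (simp add: cF.group_axioms cB.group_axioms)
  interpret hf: group_hom A A' f using f_hom unfolding group_hom_def group_hom_axioms_def
    by (simp add: cA.group_axioms cA'.group_axioms)
  interpret hphi: group_hom E F \<phi> using phi_hom unfolding group_hom_def group_hom_axioms_def
    by (simp add: cE.group_axioms cF.group_axioms)
  interpret hg: group_hom B' B g using g_hom unfolding group_hom_def group_hom_axioms_def
    by (simp add: cB'.group_axioms cB.group_axioms)
  have i_inj: "inj_on i (carrier A)" and p_surj: "p ` carrier E = carrier B'"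
    and ker_p: "{e \<in> carrier E. p e = \<one>\<^bsub>B'\<^esub>} \<subseteq> i ` carrier A"
    using sesE unfolding is_ses_def by auto
  have j_inj: "inj_on j (carrier A')" and ker_q: "{x \<in> carrier F. q x = \<one>\<^bsub>B\<^esub>} \<subseteq> j ` carrier A'"
    using sesF unfolding is_ses_def by auto
  have qj1: "\<And>a. a \<in> carrier A' \<Longrightarrow> q (j a) = \<one>\<^bsub>B\<^esub>" using sesF unfolding is_ses_def by auto
  define G where "G = A' \<times>\<times> E"
  define S where "S = {(x, b'). x \<in> carrier F \<and> b' \<in> carrier B' \<and> q x = g b'}"
  define H where "H = pullback_grp F B' q g"
  have H_eq: "H = (F \<times>\<times> B')\<lparr>carrier := S\<rparr>" unfolding H_def pullback_grp_def S_def by simp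
  interpret gG: group G unfolding G_def by (simp add: DirProd_group cA'.group_axioms cE.group_axioms)
  interpret gFB: group "F \<times>\<times> B'" by (simp add: DirProd_group cF.group_axioms cB'.group_axioms)
  have subS: "subgroup S (F \<times>\<times> B')"
  proof (rule gFB.subgroupI)
    show "S \<subseteq> carrier (F \<times>\<times> B')" unfolding S_def by auto
    have "(\<one>\<^bsub>F\<^esub>, \<one>\<^bsub>B'\<^esub>) \<in> S" unfolding S_def by simp
    then show "S \<noteq> {}" by blast
  next
    fix a assume "a \<in> S" then show "inv\<^bsub>F \<times>\<times> B'\<^esub> a \<in> S"
      unfolding S_def by (auto simp: inv_DirProd cF.group_axioms cB'.group_axioms)
  next
    fix a b assume "a \<in> S" "b \<in> S" then show "a \<otimes>\<^bsub>F \<times>\<times> B'\<^esub> b \<in> S"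
      unfolding S_def by auto
  qed
  interpret gH: group H unfolding H_eq using subgroup.subgroup_is_group[OF subS gFB.group_axioms] .
  define \<psi> where "\<psi> = (\<lambda>(a', e). (j a' \<otimes>\<^bsub>F\<^esub> \<phi> e, p e))"
  have psi_hom: "\<psi> \<in> hom G H"
  proof (rule homI)
    fix x assume "x \<in> carrier G" then show "\<psi> x \<in> carrier H"
      unfolding G_def H_eq S_def \<psi>_def using right_sq qj1 by auto
  next
    fix x y assume "x \<in> carrier G" "y \<in> carrier G" then show "\<psi> (x \<otimes>\<^bsub>G\<^esub> y) = \<psi> x \<otimes>\<^bsub>H\<^esub> \<psi> y"
      unfolding G_def H_eq \<psi>_def by (auto simp: cF.m_ac)
  qed
  interpret hpsi: group_hom G H \<psi> by (simp add: group_hom_def group_hom_axioms_def psi_hom gG.group_axioms gH.group_axioms)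
  have psi_surj: "\<psi> ` carrier G = carrier H"
  proof
    show "\<psi> ` carrier G \<subseteq> carrier H" using hpsi.hom_closed by blast
    show "carrier H \<subseteq> \<psi> ` carrier G"
    proof
      fix y assume "y \<in> carrier H"
      then obtain x b' where y: "y = (x, b')" and x: "x \<in> carrier F" and b': "b' \<in> carrier B'"
        and qx: "q x = g b'" unfolding H_eq S_def by auto
      obtain e where e: "e \<in> carrier E" and pe: "p e = b'" using p_surj b' by (metis imageE)
      have q1: "q (x \<otimes>\<^bsub>F\<^esub> inv\<^bsub>F\<^esub> (\<phi> e)) = \<one>\<^bsub>B\<^esub>"
        using x e qx pe right_sq b' by (simp add: hq.hom_mult hq.hom_inv cB.r_inv)
      have "x \<otimes>\<^bsub>F\<^esub> inv\<^bsub>F\<^esub> (\<phi> e) \<in> carrier F" using x e by simp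
      then have "x \<otimes>\<^bsub>F\<^esub> inv\<^bsub>F\<^esub> (\<phi> e) \<in> j ` carrier A'" using ker_q q1 by (intro subsetD[OF ker_q]) simp
      then obtain a' where a': "a' \<in> carrier A'" and ja: "j a' = x \<otimes>\<^bsub>F\<^esub> inv\<^bsub>F\<^esub> (\<phi> e)"
        by (metis imageE)
      have "\<psi> (a', e) = y" unfolding \<psi>_def y using ja x e pe by (simp add: cF.m_assoc)
      moreover have "(a', e) \<in> carrier G" unfolding G_def using a' e by simp
      ultimately show "y \<in> \<psi> ` carrier G" by force
    qed
  qed
  have pi1: "\<And>a. a \<in> carrier A \<Longrightarrow> p (i a) = \<one>\<^bsub>B'\<^esub>" using sesE unfolding is_ses_def by auto
  have oneH: "\<one>\<^bsub>H\<^esub> = (\<one>\<^bsub>F\<^esub>, \<one>\<^bsub>B'\<^esub>)" unfolding H_eq by simp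
  have ker: "kernel G H \<psi> = pushout_rel E A f i"
  proof
    show "kernel G H \<psi> \<subseteq> pushout_rel E A f i"
    proof
      fix x assume "x \<in> kernel G H \<psi>"
      then obtain a' e where x: "x = (a', e)" and a': "a' \<in> carrier A'" and e: "e \<in> carrier E"
        and k1: "j a' \<otimes>\<^bsub>F\<^esub> \<phi> e = \<one>\<^bsub>F\<^esub>" and k2: "p e = \<one>\<^bsub>B'\<^esub>"
        unfolding kernel_def G_def oneH \<psi>_def by auto
      obtain a where a: "a \<in> carrier A" and ea: "e = i a" using ker_p e k2 by blast
      have "j a' = inv\<^bsub>F\<^esub> (\<phi> e)" using k1 a' e cF.inv_equality by simp
      also have "\<dots> = j (f (inv\<^bsub>A\<^esub> a))" using ea a left_sq by (simp add: hf.hom_inv hj.hom_inv)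
      finally have "a' = f (inv\<^bsub>A\<^esub> a)" using j_inj a' a by (simp add: inj_on_def)
      moreover have "e = inv\<^bsub>E\<^esub> (i (inv\<^bsub>A\<^esub> a))" using ea a by (simp add: hi.hom_inv)
      ultimately show "x \<in> pushout_rel E A f i" unfolding pushout_rel_def x using a by blast
    qed
    show "pushout_rel E A f i \<subseteq> kernel G H \<psi>"
    proof
      fix x assume "x \<in> pushout_rel E A f i"
      then obtain a where a: "a \<in> carrier A" and x: "x = (f a, inv\<^bsub>E\<^esub> (i a))"
        unfolding pushout_rel_def by auto
      have "j (f a) \<otimes>\<^bsub>F\<^esub> \<phi> (inv\<^bsub>E\<^esub> (i a)) = \<one>\<^bsub>F\<^esub>"
        using a left_sq by (simp add: hphi.hom_inv)
      moreover have "p (inv\<^bsub>E\<^esub> (i a)) = \<one>\<^bsub>B'\<^esub>" using a pi1 by (simp add: hp.hom_inv)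
      ultimately show "x \<in> kernel G H \<psi>" unfolding kernel_def G_def oneH \<psi>_def x using a by simp
    qed
  qed
  have iso: "(\<lambda>C. the_elem (\<psi> ` C)) \<in> iso (pushout_grp A A' E f i) H"
  proof -
    have "(\<lambda>C. the_elem (\<psi> ` C)) \<in> iso (G Mod kernel G H \<psi>) H"
      using hpsi.FactGroup_iso_set[OF psi_surj] .
    then show ?thesis unfolding ker unfolding pushout_grp_def G_def .
  qed
  have coset: "\<And>x \<theta>. x \<in> carrier G \<Longrightarrow> (\<And>n. n \<in> pushout_rel E A f i \<Longrightarrow> \<theta> (n \<otimes>\<^bsub>G\<^esub> x) = \<theta> x)
     \<Longrightarrow> \<theta> ` (pushout_rel E A f i #>\<^bsub>G\<^esub> x) = {\<theta> x}"
  proof -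
    fix x and \<theta> :: "'c \<times> 'e \<Rightarrow> 'z"
    assume "x \<in> carrier G" and th: "\<And>n. n \<in> pushout_rel E A f i \<Longrightarrow> \<theta> (n \<otimes>\<^bsub>G\<^esub> x) = \<theta> x"
    define n0 where "n0 = (f \<one>\<^bsub>A\<^esub>, inv\<^bsub>E\<^esub> (i \<one>\<^bsub>A\<^esub>))"
    have n0: "n0 \<in> pushout_rel E A f i" unfolding pushout_rel_def n0_def by blast
    show "\<theta> ` (pushout_rel E A f i #>\<^bsub>G\<^esub> x) = {\<theta> x}"
    proof
      show "\<theta> ` (pushout_rel E A f i #>\<^bsub>G\<^esub> x) \<subseteq> {\<theta> x}"
        unfolding r_coset_def using th by auto
      have "n0 \<otimes>\<^bsub>G\<^esub> x \<in> pushout_rel E A f i #>\<^bsub>G\<^esub> x"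
        unfolding r_coset_def using n0 by auto
      then have "\<theta> (n0 \<otimes>\<^bsub>G\<^esub> x) \<in> \<theta> ` (pushout_rel E A f i #>\<^bsub>G\<^esub> x)" by (rule imageI)
      then show "{\<theta> x} \<subseteq> \<theta> ` (pushout_rel E A f i #>\<^bsub>G\<^esub> x)" using th[OF n0] by simp
    qed
  qed
  have psi_coset: "\<And>x. x \<in> carrier G \<Longrightarrow> \<psi> ` (pushout_rel E A f i #>\<^bsub>G\<^esub> x) = {\<psi> x}"
  proof (rule coset)
    fix x n assume x: "x \<in> carrier G" and n: "n \<in> pushout_rel E A f i"
    then have nk: "n \<in> kernel G H \<psi>" using ker by simp
    then have "n \<in> carrier G" "\<psi> n = \<one>\<^bsub>H\<^esub>" unfolding kernel_def by auto
    then show "\<psi> (n \<otimes>\<^bsub>G\<^esub> x) = \<psi> x" using x by simp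
  qed
  have proj_coset: "\<And>x. x \<in> carrier G \<Longrightarrow> (\<lambda>(a', e). p e) ` (pushout_rel E A f i #>\<^bsub>G\<^esub> x) = {(\<lambda>(a', e). p e) x}"
  proof (rule coset)
    fix x n assume x: "x \<in> carrier G" and n: "n \<in> pushout_rel E A f i"
    then obtain a where a: "a \<in> carrier A" and nd: "n = (f a, inv\<^bsub>E\<^esub> (i a))"
      unfolding pushout_rel_def by auto
    obtain a' e where xd: "x = (a', e)" and e: "e \<in> carrier E" using x unfolding G_def by auto
    show "(\<lambda>(a', e). p e) (n \<otimes>\<^bsub>G\<^esub> x) = (\<lambda>(a', e). p e) x"
      unfolding nd xd G_def using a e pi1 by (simp add: hp.hom_inv)
  qed
  show ?thesis unfolding ses_iso_def H_def[symmetric]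
  proof (intro exI conjI ballI)
    show "(\<lambda>C. the_elem (\<psi> ` C)) \<in> iso (pushout_grp A A' E f i) H" by (rule iso)
  next
    fix a' assume a': "a' \<in> carrier A'"
    have "(a', \<one>\<^bsub>E\<^esub>) \<in> carrier G" unfolding G_def using a' by simp
    moreover have "pushout_inc A A' E f i a' = pushout_rel E A f i #>\<^bsub>G\<^esub> (a', \<one>\<^bsub>E\<^esub>)"
      unfolding pushout_inc_def G_def by simp
    ultimately show "the_elem (\<psi> ` pushout_inc A A' E f i a') = pullback_inc B' j a'"
      using psi_coset a' unfolding pullback_inc_def \<psi>_def by simp
  next
    fix C assume "C \<in> carrier (pushout_grp A A' E f i)"
    then obtain x where x: "x \<in> carrier G" and C: "C = pushout_rel E A f i #>\<^bsub>G\<^esub> x"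
      unfolding pushout_grp_def FactGroup_def RCOSETS_def G_def by auto
    obtain a' e where xd: "x = (a', e)" using prod.exhaust by blast
    show "pullback_proj (the_elem (\<psi> ` C)) = pushout_proj p C"
      unfolding pushout_proj_def C using psi_coset[OF x] proj_coset[OF x]
      by (simp add: pullback_proj_def \<psi>_def xd)
  qed
qed

end
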